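(* Every connected threshold graph on $n\geq 2$ vertices is isomorphic to an induced subgraph of the anti-regular graph $A_{2n-2}$. More precisely, let $G$ be a connected threshold graph with binary string $b=0^{s_1}1^{t_1}\cdots 0^{s_k}1^{t_k}$ (all $s_i,t_i\geq 1$) and $n=\sum_{i=1}^k(s_i+t_i)$ vertices. Let $N=2(n-k)$ if $s_1=1$ and $N=2(n-k)-1$ if $s_1\geq 2$. Then $G$ is an induced subgraph of $A_N$, and $A_N$ is the smallest anti-regular graph containing $G$ as an induced subgraph.
   Context: Threshold graphs from binary strings: given $b=b_1b_2\cdots b_n\in\{0,1\}^n$ with $b_1=0$, let $G_1$ be a single vertex, and for $j=2,\ldots,n$ obtain $G_j$ from $G_{j-1}$ by adding a new vertex which is adjacent to all previous vertices if $b_j=1$ and isolated if $b_j=0$; $G(b)=G_n$ and $b$ is called the binary string of $G(b)$. $G(b)$ is connected iff $b_n=1$. The notation $0^{s}$ (resp. $1^t$) denotes $s$ consecutive zeros (resp. $t$ consecutive ones). The anti-regular graph $A_m$ is $G(b)$ with $b=0101\cdots01$ (length $m$) when $m$ is even and $b=00101\cdots01$ (length $m$) when $m$ is odd. *)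

theory Defs
  imports Main
begin

(* Binary strings are bool lists (True = 1, False = 0); position j (0-indexed)
   corresponds to b_{j+1}.  Vertices of G(b) are 0..<length b, vertex j being the
   one added at step j+1. *)

definition thr_adj :: "bool list \<Rightarrow> nat \<Rightarrow> nat \<Rightarrow> bool" where
  "thr_adj b i j \<longleftrightarrow> i \<noteq> j \<and> i < length b \<and> j < length b \<and> b ! (max i j)"

definition induced_sub :: "bool list \<Rightarrow> bool list \<Rightarrow> bool" where
  "induced_sub b c \<longleftrightarrow>
     (\<exists>f. inj_on f {0..<length b} \<and> f ` {0..<length b} \<subseteq> {0..<length c} \<and>
          (\<forall>i<length b. \<forall>j<length b. thr_adj b i j \<longleftrightarrow> thr_adj c (f i) (f j)))"

definition antireg :: "nat \<Rightarrow> bool list" where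
  "antireg m = (if even m then map (\<lambda>i. odd i) [0..<m]
                else map (\<lambda>i. 1 \<le> i \<and> even i) [0..<m])"

definition block_string :: "nat list \<Rightarrow> nat list \<Rightarrow> bool list" where
  "block_string s t = concat (map (\<lambda>i. replicate (s ! i) False @ replicate (t ! i) True)
                                  [0..<length s])"

end

theory Submission imports Defs begin

lemma thr_adj_sym: "thr_adj b i j = thr_adj b j i"
  unfolding thr_adj_def by (auto simp: max.commute)

lemma mono_embed:
  assumes mono: "\<And>i j. i < j \<Longrightarrow> j < length b \<Longrightarrow> h i < h j"
    and rng: "\<And>i. i < length b \<Longrightarrow> h i < length c"
    and bits: "\<And>i. 1 \<le> i \<Longrightarrow> i < length b \<Longrightarrow> c ! (h i) = b ! i"
  shows "induced_sub b c"
  unfolding induced_sub_def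
proof (intro exI conjI allI impI)
  show "inj_on h {0..<length b}"
    unfolding inj_on_def by (metis atLeastLessThan_iff linorder_neqE_nat mono nat_less_le)
  show "h ` {0..<length b} \<subseteq> {0..<length c}" using rng by auto
  fix i j assume i: "i < length b" and j: "j < length b"
  show "thr_adj b i j = thr_adj c (h i) (h j)"
  proof (cases "i = j")
    case True then show ?thesis by (simp add: thr_adj_def)
  next
    case False
    then consider "i < j" | "j < i" by arith
    then show ?thesis
    proof cases
      case 1
      then have "h i < h j" using mono j by blast
      moreover have "1 \<le> j" using 1 by arith
      ultimately show ?thesis using i j rng bits 1 by (simp add: thr_adj_def max_def)
    next
      case 2
      then have "h j < h i" using mono i by blast
      moreover have "1 \<le> i" using 2 by arith
      ultimately show ?thesis using i j rng bits 2 by (simp add: thr_adj_def max_def)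
    qed
  qed
qed

lemma thr_adj_take: "i < l \<Longrightarrow> j < l \<Longrightarrow> l \<le> length b \<Longrightarrow> thr_adj (take l b) i j = thr_adj b i j"
  unfolding thr_adj_def by (auto simp: max_def)

lemma embed_mono:
  assumes "length b = n" "inj_on f {0..<n}" "f ` {0..<n} \<subseteq> {0..<m}" "m \<le> length c"
    "\<forall>i<n. \<forall>j<n. thr_adj b i j = thr_adj c (f i) (f j)"
  shows "\<exists>h. (\<forall>i j. i < j \<longrightarrow> j < n \<longrightarrow> h i < h j) \<and> (\<forall>i<n. h i < m)
     \<and> (\<forall>i. 1 \<le> i \<longrightarrow> i < n \<longrightarrow> c ! (h i) = b ! i)"
  using assms
proof (induction n arbitrary: b f m)
  case 0 then show ?case by auto
next
  case (Suc l)
  show ?case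
  proof (cases "l = 0")
    case True
    then show ?thesis using Suc.prems by (intro exI[of _ f]) auto
  next
    case False
    define S where "S = f ` {0..<Suc l}"
    have finS: "finite S" "S \<noteq> {}" unfolding S_def by auto
    define u where "u = Max S"
    have uS: "u \<in> S" using finS unfolding u_def by simp
    have Sle: "\<And>x. x \<in> S \<Longrightarrow> x \<le> u" using finS unfolding u_def by simp
    obtain j where j: "j < Suc l" "f j = u" using uS unfolding S_def by auto
    have um: "u < m" using uS Suc.prems(3) unfolding S_def by auto
    have uc: "u < length c" using um Suc.prems(4) by simp
    have Sc: "\<And>x. x \<in> S \<Longrightarrow> x < length c" using Sle uc by fastforce
    have adjS: "\<And>x y. x \<in> S \<Longrightarrow> y \<in> S \<Longrightarrow> x \<noteq> y \<Longrightarrow> (x = u \<or> y = u) \<Longrightarrow> thr_adj c x y = c ! u"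
    proof -
      fix x y assume "x \<in> S" "y \<in> S" "x \<noteq> y" "x = u \<or> y = u"
      then show "thr_adj c x y = c ! u" using Sle[of x] Sle[of y] Sc[of x] Sc[of y]
        unfolding thr_adj_def by (auto simp: max_def)
    qed
    have inj: "inj_on f {0..<Suc l}" using Suc.prems(2) .
    have adj: "\<And>x y. x < Suc l \<Longrightarrow> y < Suc l \<Longrightarrow> thr_adj b x y = thr_adj c (f x) (f y)"
      using Suc.prems(5) by blast
    have lb: "length b = Suc l" using Suc.prems(1) .
    have adjl: "\<And>i. i < l \<Longrightarrow> thr_adj b i l = b ! l" using lb unfolding thr_adj_def by (simp add: max_def)
    define w where "w = (if j = l then 0 else j)"
    have w: "w < l" using j False unfolding w_def by auto
    have fw: "f w \<noteq> f l" using inj w by (metis atLeastLessThan_iff inj_on_def lessI less_Suc_eq less_irrefl zero_le)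
    have "thr_adj b w l = thr_adj c (f w) (f l)" using adj w by simp
    also have "\<dots> = c ! u" apply (rule adjS) using w fw j unfolding S_def w_def by (auto split: if_splits)
    finally have cu: "c ! u = b ! l" using adjl w by simp
    have fu: "\<And>x. x < Suc l \<Longrightarrow> x \<noteq> j \<Longrightarrow> f x \<noteq> u"
      using inj j by (metis atLeastLessThan_iff inj_on_def zero_le)
    have twin: "\<And>x. x < Suc l \<Longrightarrow> x \<noteq> j \<Longrightarrow> x \<noteq> l \<Longrightarrow> thr_adj b x j = thr_adj b x l"
    proof -
      fix x assume x: "x < Suc l" "x \<noteq> j" "x \<noteq> l"
      have "thr_adj b x j = thr_adj c (f x) u" using adj x j by simp
      also have "\<dots> = c ! u" apply (rule adjS) using x j fu[of x] unfolding S_def by auto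
      finally show "thr_adj b x j = thr_adj b x l" using cu adjl[of x] x by simp
    qed
    define g where "g = (\<lambda>x. if x = j then l else if x = l then j else x)"
    have gr: "\<And>x. x < Suc l \<Longrightarrow> g x < Suc l" using j unfolding g_def by auto
    have gaut: "\<And>x y. x < Suc l \<Longrightarrow> y < Suc l \<Longrightarrow> thr_adj b (g x) (g y) = thr_adj b x y"
    proof -
      fix x y assume x: "x < Suc l" and y: "y < Suc l"
      show "thr_adj b (g x) (g y) = thr_adj b x y"
        unfolding g_def using twin[OF x] twin[OF y] thr_adj_sym[of b] x y j
        by (auto simp: thr_adj_def)
    qed
    define f2 where "f2 = f \<circ> g"
    have f2l: "f2 l = u" using j unfolding f2_def g_def by auto
    have ginj: "inj_on g {0..<Suc l}" unfolding g_def inj_on_def by auto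
    have inj2: "inj_on f2 {0..<Suc l}" unfolding f2_def
      apply (rule comp_inj_on[OF ginj]) using gr inj
      by (metis atLeastLessThan_iff image_subset_iff inj_on_subset zero_le)
    have f2S: "\<And>x. x < Suc l \<Longrightarrow> f2 x \<in> S" unfolding f2_def S_def using gr by auto
    have IH: "\<exists>h. (\<forall>i j. i < j \<longrightarrow> j < l \<longrightarrow> h i < h j) \<and> (\<forall>i<l. h i < u)
     \<and> (\<forall>i. 1 \<le> i \<longrightarrow> i < l \<longrightarrow> c ! (h i) = take l b ! i)"
    proof (rule Suc.IH)
      show "length (take l b) = l" using lb by simp
      show "inj_on f2 {0..<l}" using inj2 by (rule inj_on_subset) auto
      show "f2 ` {0..<l} \<subseteq> {0..<u}"
      proof
        fix y assume "y \<in> f2 ` {0..<l}"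
        then obtain x where x: "x < l" "y = f2 x" by auto
        have "f2 x \<noteq> f2 l" using inj2 x by (metis atLeastLessThan_iff inj_on_def less_Suc_eq less_irrefl zero_le)
        moreover have "f2 x \<le> u" using f2S[of x] Sle x by simp
        ultimately show "y \<in> {0..<u}" using x f2l by auto
      qed
      show "u \<le> length c" using uc by simp
      show "\<forall>i<l. \<forall>j<l. thr_adj (take l b) i j = thr_adj c (f2 i) (f2 j)"
      proof (intro allI impI)
        fix i i' assume i: "i < l" and i': "i' < l"
        have "thr_adj (take l b) i i' = thr_adj b i i'" using i i' lb by (simp add: thr_adj_take)
        also have "\<dots> = thr_adj b (g i) (g i')" using gaut i i' by simp
        also have "\<dots> = thr_adj c (f2 i) (f2 i')" using adj gr i i' unfolding f2_def by simp
        finally show "thr_adj (take l b) i i' = thr_adj c (f2 i) (f2 i')" .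
      qed
    qed
    then obtain h where h: "\<forall>i j. i < j \<longrightarrow> j < l \<longrightarrow> h i < h j" "\<forall>i<l. h i < u"
      "\<forall>i. 1 \<le> i \<longrightarrow> i < l \<longrightarrow> c ! (h i) = take l b ! i" by blast
    show ?thesis
    proof (intro exI[of _ "h(l := u)"] conjI allI impI)
      fix i i' assume "i < i'" "i' < Suc l"
      then show "(h(l := u)) i < (h(l := u)) i'" using h(1,2) by (auto simp: less_Suc_eq)
    next
      fix i assume "i < Suc l" then show "(h(l := u)) i < m" using h(2) um by (auto simp: less_Suc_eq)
    next
      fix i assume "1 \<le> i" "i < Suc l"
      then show "c ! (h(l := u)) i = b ! i" using h(3) cu by (auto simp: less_Suc_eq)
    qed
  qed
qed


definition Ecnt :: "bool list \<Rightarrow> nat \<Rightarrow> nat" where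
  "Ecnt b j = length (filter (\<lambda>i. b ! i = b ! Suc i) [1..<j])"

lemma Ecnt_Suc: "1 \<le> j \<Longrightarrow> Ecnt b (Suc j) = Ecnt b j + (if b ! j = b ! Suc j then 1 else 0)"
  unfolding Ecnt_def by simp

lemma Ecnt_1: "Ecnt b 1 = 0" unfolding Ecnt_def by simp

lemma ar_bit: "1 \<le> p \<Longrightarrow> p < M \<Longrightarrow> antireg M ! p = (if even M then odd p else even p)"
  unfolding antireg_def by auto

lemma lower_bound:
  assumes n: "length b = n" "2 \<le> n"
    and mono: "\<forall>i j. i < j \<longrightarrow> j < n \<longrightarrow> h i < h j" and rng: "\<forall>i<n. h i < M"
    and bits: "\<forall>i. 1 \<le> i \<longrightarrow> i < n \<longrightarrow> antireg M ! (h i) = b ! i"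
  shows "n + Ecnt b (n - 1) \<le> M"
proof -
  have "h 0 < h 1" using mono n by simp
  then have h1: "1 \<le> h 1" by simp
  have step: "h 1 + (j - 1) + Ecnt b j \<le> h j" if "1 \<le> j" "j < n" for j
    using that
  proof (induction j rule: dec_induct)
    case base then show ?case using Ecnt_1[of b] by simp
  next
    case (step j)
    have hj: "h j < h (Suc j)" using mono step by simp
    have hj1: "1 \<le> h j"
    proof (cases "j = 1")
      case False then have "h 1 < h j" using mono step by simp
      then show ?thesis using h1 by simp
    qed (use h1 in simp)
    have "h (Suc j) \<ge> h j + (if b ! j = b ! Suc j then 2 else 1)"
    proof (cases "b ! j = b ! Suc j")
      case True
      show ?thesis
      proof (rule ccontr)
        assume "\<not> ?thesis"
        then have "h (Suc j) = Suc (h j)" using hj True by simp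
        moreover have "antireg M ! h j = b ! j" "antireg M ! h (Suc j) = b ! Suc j"
          using bits step by auto
        moreover have "h (Suc j) < M" using rng step by simp
        ultimately have "antireg M ! h j = b ! j" "antireg M ! Suc (h j) = b ! j"
          "Suc (h j) < M" using True by auto
        then show False using ar_bit[of "h j" M] ar_bit[of "Suc (h j)" M] hj1 by (cases "even M") auto
      qed
    qed (use hj in simp)
    then show ?case using step Ecnt_Suc[of j b] by auto
  qed
  have "h 1 + (n - 2) + Ecnt b (n - 1) \<le> h (n - 1)" using step[of "n - 1"] n by (simp add: numeral_2_eq_2)
  moreover have "h (n - 1) < M" using rng n by simp
  ultimately show ?thesis using h1 n by linarith
qed

definition bitpat :: "nat \<Rightarrow> nat \<Rightarrow> bool" where
  "bitpat M p = (if even M then odd p else even p)"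

lemma upper_bound:
  assumes n: "length b = n" "2 \<le> n" and p1: "1 \<le> p1" "bitpat M p1 = b ! 1"
    and lt: "p1 + (n - 2) + Ecnt b (n - 1) < M"
  shows "induced_sub b (antireg M)"
proof -
  define h where "h j = (if j = 0 then 0 else p1 + (j - 1) + Ecnt b j)" for j
  have hS: "h (Suc j) = h j + (if b ! j = b ! Suc j then 2 else 1)" if "1 \<le> j" for j
    using that Ecnt_Suc[of j b] unfolding h_def by auto
  have mono1: "h j < h (Suc j)" for j
    using hS[of j] p1 unfolding h_def by (cases "j = 0") auto
  have mono: "h i < h j" if "i < j" for i j
    using that by (induction j) (auto simp: less_Suc_eq intro: less_trans mono1)
  have hmax: "h (n - 1) < M" using lt n unfolding h_def by simp
  have rng: "h j < M" if "j < n" for j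
    using mono[of j "n - 1"] hmax that by (cases "j = n - 1") (auto, linarith)
  have bits: "bitpat M (h j) = b ! j" if "1 \<le> j" "j < n" for j
    using that
  proof (induction j rule: dec_induct)
    case base then show ?case using p1 Ecnt_1[of b] unfolding h_def by simp
  next
    case (step j)
    then show ?case using hS[of j] unfolding bitpat_def by auto
  qed
  show ?thesis
  proof (rule mono_embed)
    show "\<And>i j. i < j \<Longrightarrow> j < length b \<Longrightarrow> h i < h j" using mono by blast
    show "\<And>i. i < length b \<Longrightarrow> h i < length (antireg M)" using rng n by (simp add: antireg_def)
    show "\<And>i. 1 \<le> i \<Longrightarrow> i < length b \<Longrightarrow> antireg M ! h i = b ! i"
    proof -
      fix i assume i: "1 \<le> i" "i < length b"
      have "1 \<le> h i" using i p1 unfolding h_def by simp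
      then show "antireg M ! h i = b ! i" using ar_bit[of "h i" M] rng[of i] bits[of i] i n
        unfolding bitpat_def by simp
    qed
  qed
qed

fun chg :: "bool list \<Rightarrow> nat" where
  "chg (x # y # r) = (if x \<noteq> y then 1 else 0) + chg (y # r)"
| "chg _ = 0"

lemma chg_filter: "chg xs = length (filter (\<lambda>i. xs ! i \<noteq> xs ! Suc i) [0..<length xs - 1])"
proof (induction xs rule: chg.induct)
  case (1 x y r)
  define P where "P = (\<lambda>i. (x # y # r) ! i \<noteq> (x # y # r) ! Suc i)"
  define Q where "Q = (\<lambda>i. (y # r) ! i \<noteq> (y # r) ! Suc i)"
  have PQ: "P \<circ> Suc = Q" unfolding P_def Q_def by (rule ext) simp
  have e: "[0..<length (x # y # r) - 1] = 0 # map Suc [0..<length (y # r) - 1]"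
    by (simp add: upt_conv_Cons map_Suc_upt del: upt_Suc)
  have "length (filter P [0..<length (x # y # r) - 1]) = (if P 0 then 1 else 0) + length (filter Q [0..<length (y # r) - 1])"
    unfolding e by (simp add: filter_map PQ)
  then show ?case using 1 unfolding P_def Q_def by simp
qed auto
lemma chg_rep: "chg (x # replicate a x @ r) = chg (x # r)"
  by (induction a) auto

lemma bs_map2: "length s = length t \<Longrightarrow>
  block_string s t = concat (map2 (\<lambda>a b. replicate a False @ replicate b True) s t)"
  unfolding block_string_def
  by (rule arg_cong[where f = concat], rule nth_equalityI) auto

lemma bs_Cons: "length s = length t \<Longrightarrow>
  block_string (a # s) (b # t) = replicate a False @ replicate b True @ block_string s t"
  by (simp add: bs_map2)

lemma bs_props:
  assumes "length s = length t" "\<forall>i<length s. s ! i \<ge> 1 \<and> t ! i \<ge> 1"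
  shows "2 * length s \<le> length (block_string s t)
    \<and> (s \<noteq> [] \<longrightarrow> chg (block_string s t) = 2 * length s - 1 \<and> block_string s t ! 0 = False)"
  using assms
proof (induction s t rule: list_induct2)
  case Nil then show ?case by (simp add: bs_map2)
next
  case (Cons a s b t)
  have a: "a \<ge> 1" and b: "b \<ge> 1" using Cons.prems by auto
  have IH: "2 * length s \<le> length (block_string s t)
    \<and> (s \<noteq> [] \<longrightarrow> chg (block_string s t) = 2 * length s - 1 \<and> block_string s t ! 0 = False)"
    apply (rule Cons.IH) using Cons.prems by (auto simp: nth_Cons_Suc)
  obtain a' where a': "a = Suc a'" using a by (cases a) auto
  obtain b' where b': "b = Suc b'" using b by (cases b) auto
  have c1: "chg (replicate a False @ replicate b True @ r) = 1 + chg (True # r)" for r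
    using chg_rep[of False a' "True # replicate b' True @ r"] chg_rep[of True b' r]
    by (simp add: a' b')
  have "chg (block_string (a # s) (b # t)) = 2 * length (a # s) - 1"
  proof (cases "s = []")
    case True then show ?thesis using Cons.hyps c1[of "[]"] by (simp add: bs_Cons bs_map2)
  next
    case False
    then have "block_string s t \<noteq> []" using IH by auto
    then obtain r where r: "block_string s t = False # r" using IH False by (cases "block_string s t") auto
    have "length s \<ge> 1" using False by (cases s) auto
    then show ?thesis using c1[of "block_string s t"] IH False Cons.hyps r by (simp add: bs_Cons)
  qed
  then show ?case using IH Cons.hyps a' b' by (simp add: bs_Cons)
qed

theorem theorem3p1:
  fixes s t :: "nat list" and k n N :: nat
  assumes "length s = k" and "length t = k" and "k \<ge> 1"
    and "\<forall>i<k. s ! i \<ge> 1 \<and> t ! i \<ge> 1"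
    and "n = length (block_string s t)"
    and "N = (if s ! 0 = 1 then 2 * (n - k) else 2 * (n - k) - 1)"
  shows "n \<ge> 2
    \<and> induced_sub (block_string s t) (antireg (2 * n - 2))
    \<and> induced_sub (block_string s t) (antireg N)
    \<and> (\<forall>M. induced_sub (block_string s t) (antireg M) \<longrightarrow> N \<le> M)"
proof -
  define B where "B = block_string s t"
  obtain a s' where s: "s = a # s'" using assms(1,3) by (cases s) auto
  obtain bb t' where t: "t = bb # t'" using assms(2,3) by (cases t) auto
  have a1: "a \<ge> 1" "bb \<ge> 1" using assms(4,3) s t by auto
  have lst: "length s' = length t'" using assms(1,2) s t by simp
  have BC: "B = replicate a False @ replicate bb True @ block_string s' t'"
    unfolding B_def s t using lst by (rule bs_Cons)
  have props: "2 * length s \<le> length (block_string s t)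
    \<and> (s \<noteq> [] \<longrightarrow> chg (block_string s t) = 2 * length s - 1 \<and> block_string s t ! 0 = False)"
    by (rule bs_props) (use assms in auto)
  have lenB: "length B = n" using assms(5) B_def by simp
  have nk: "2 * k \<le> n" and chgB: "chg B = 2 * k - 1" and B0: "B ! 0 = False"
    using props assms(1,5) s unfolding B_def by auto
  have n2: "2 \<le> n" using nk assms(3) by simp
  have B1: "B ! 1 = (a = 1)"
  proof -
    obtain a' where a': "a = Suc a'" using a1 by (cases a) auto
    obtain b' where b': "bb = Suc b'" using a1 by (cases bb) auto
    show ?thesis unfolding BC a' b' by (cases a') auto
  qed
  have s0: "s ! 0 = a" by (simp add: s)
  define P where "P = (\<lambda>i. B ! i \<noteq> B ! Suc i)"
  have D: "length (filter P [0..<n - 1]) = 2 * k - 1"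
    using chgB chg_filter[of B] lenB unfolding P_def by simp
  have spl: "[0..<n - 1] = 0 # [1..<n - 1]" using n2 by (simp add: upt_conv_Cons)
  have D2: "length (filter P [0..<n - 1]) = (if P 0 then 1 else 0) + length (filter P [1..<n - 1])"
    by (subst spl) simp
  have E: "Ecnt B (n - 1) + length (filter P [1..<n - 1]) = n - 2"
    unfolding Ecnt_def P_def using sum_length_filter_compl[of "\<lambda>i. B ! i = B ! Suc i" "[1..<n - 1]"]
    by simp
  have P0: "P 0 = (a = 1)" using B0 B1 unfolding P_def by simp
  have Eval: "Ecnt B (n - 1) = (if a = 1 then n - 2 * k else n - 2 * k - 1)"
    using D D2 E P0 nk assms(3) by (cases "a = 1") auto
  have nk2: "a \<noteq> 1 \<Longrightarrow> 2 * k + 1 \<le> n" using D D2 E P0 n2 assms(3) by auto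
  have Nval: "N = n + Ecnt B (n - 1)" using assms(6) s0 Eval nk nk2 assms(3) by auto
  have up1: "induced_sub B (antireg (2 * n - 2))"
  proof (rule upper_bound[OF lenB n2])
    show "1 \<le> (if a = 1 then 1 else 2::nat)" by simp
    show "bitpat (2 * n - 2) (if a = 1 then 1 else 2) = B ! 1"
      using B1 n2 unfolding bitpat_def by auto
    show "(if a = 1 then 1 else 2) + (n - 2) + Ecnt B (n - 1) < 2 * n - 2"
      using Eval nk nk2 assms(3) by auto
  qed
  have up2: "induced_sub B (antireg N)"
  proof (rule upper_bound[OF lenB n2])
    show "1 \<le> (1::nat)" by simp
    have "even N = (a = 1)" using assms(6) s0 nk nk2 assms(3) by auto
    then show "bitpat N 1 = B ! 1" using B1 unfolding bitpat_def by auto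
    show "1 + (n - 2) + Ecnt B (n - 1) < N" using Nval n2 by simp
  qed
  have low: "N \<le> M" if sub: "induced_sub B (antireg M)" for M
  proof -
    obtain f where f: "inj_on f {0..<length B}" "f ` {0..<length B} \<subseteq> {0..<length (antireg M)}"
      "\<forall>i<length B. \<forall>j<length B. thr_adj B i j = thr_adj (antireg M) (f i) (f j)"
      using sub unfolding induced_sub_def by blast
    have lM: "length (antireg M) = M" by (simp add: antireg_def)
    obtain h where h: "\<forall>i j. i < j \<longrightarrow> j < n \<longrightarrow> h i < h j" "\<forall>i<n. h i < M"
      "\<forall>i. 1 \<le> i \<longrightarrow> i < n \<longrightarrow> antireg M ! (h i) = B ! i"
      using embed_mono[OF lenB, of f M "antireg M"] f lenB lM by auto
    show ?thesis using lower_bound[OF lenB n2 h] Nval by simp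
  qed
  show ?thesis using n2 up1 up2 low unfolding B_def by blast
qed

end
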